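(* Let $v$ be a $P$-vertex of the SP tree $T$ with children $x,y$. Then for all $\tilde{\boldsymbol s}_v\in\mathbb Z^{\Lambda}$ and $\tilde{\boldsymbol c}_v\in\mathbb Z_{\ge0}^{\Lambda}$, $$d_v(\tilde{\boldsymbol s}_v,\tilde{\boldsymbol c}_v)=\min\{d_x(\tilde{\boldsymbol s}_x,\tilde{\boldsymbol c}_x)+d_y(\tilde{\boldsymbol s}_y,\tilde{\boldsymbol c}_y)\ :\ \tilde{\boldsymbol s}_x+\tilde{\boldsymbol s}_y=\tilde{\boldsymbol s}_v,\ \tilde{\boldsymbol c}_x+\tilde{\boldsymbol c}_y=\tilde{\boldsymbol c}_v,\ \tilde{\boldsymbol s}_x,\tilde{\boldsymbol s}_y\in\mathbb Z_{\ge0}^{\Lambda},\ \tilde{\boldsymbol c}_x,\tilde{\boldsymbol c}_y\in\mathbb Z_{\ge0}^{\Lambda}\},$$ with the conventions $\infty+z=\infty$ and $\min\emptyset=\infty$.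
   Context: A RobMCF instance $(G,u,c,\boldsymbol b)$ consists of a finite directed graph (parallel arcs allowed) $G=(V,A)$ with $A=A^{\mathrm{fix}}\cup A^{\mathrm{free}}$ (disjoint; fixed and free arcs), capacities $u:A\to\mathbb Z_{\ge0}$, costs $c:A\to\mathbb Z_{\ge0}$, a finite nonempty scenario set $\Lambda$ and balances $b^\lambda:V\to\mathbb Z$, $\lambda\in\Lambda$, with $\sum_v b^\lambda(v)=0$. Series-parallel (SP) digraphs are defined recursively: a single arc $(o,q)$ is an SP digraph with origin $o$ and target $q$; if $G_1$ (origin $o_1$, target $q_1$) and $G_2$ (origin $o_2$, target $q_2$) are SP digraphs, then their series composition (identify $q_1$ with $o_2$; origin $o_1$, target $q_2$) and their parallel composition (identify $o_1$ with $o_2$ to form the origin and $q_1$ with $q_2$ to form the target) are SP digraphs. Here $G$ is an SP digraph. An SP tree $T$ of $G$ is a rooted binary tree whose leaves ($L$-vertices) correspond bijectively to the arcs of $G$ and whose inner vertices are $S$-vertices (ordered children) or $P$-vertices; each tree vertex $v$ is associated with the SP subgraph $G_v$ (origin $o_v$, target $q_v$): a leaf with its single arc, an $S$-vertex with the series composition of its children's subgraphs (first child first), a $P$-vertex with their parallel composition; the root $r$ has $G_r=G$. For a tree vertex $v$, $\tilde{\boldsymbol s}_v=(\tilde s^\lambda_v)_{\lambda\in\Lambda}\in\mathbb Z^{\Lambda}$ and $\tilde{\boldsymbol c}_v=(\tilde c^\lambda_v)_{\lambda\in\Lambda}\in\mathbb Z_{\ge0}^{\Lambda}$, the demand label $d_v(\tilde{\boldsymbol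 s}_v,\tilde{\boldsymbol c}_v)\in\{0,\infty\}$ equals $0$ if there exist functions $f^\lambda:A(G_v)\to\mathbb Z_{\ge0}$, $\lambda\in\Lambda$, with (i) $\sum_{a\in A(G_v)}c(a)f^\lambda(a)=\tilde c^\lambda_v$ for all $\lambda$; (ii) for all $w\in V(G_v)\setminus\{q_v\}$ and $\lambda$: $\sum_{a=(w,z)\in A(G_v)}f^\lambda(a)-\sum_{a=(z,w)\in A(G_v)}f^\lambda(a)$ equals $b^\lambda(w)$ if $w\ne o_v$ and equals $\tilde s^\lambda_v$ if $w=o_v$; (iii) $f^\lambda(a)=f^{\lambda'}(a)$ for all $a\in A^{\mathrm{fix}}\cap A(G_v)$ and $\lambda,\lambda'$; (iv) $f^\lambda(a)\le u(a)$ for all $a\in A(G_v)$, $\lambda$; and $d_v(\tilde{\boldsymbol s}_v,\tilde{\boldsymbol c}_v)=\infty$ otherwise. *)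

theory Defs
  imports Main "HOL-Library.Extended_Nat"
begin

(* SP trees: leaves carry arcs (arc identifiers of type 'a; parallel arcs allowed).
   SPS = S-vertex (ordered children), SPP = P-vertex. *)
datatype 'a sptree = SPL 'a | SPS "'a sptree" "'a sptree" | SPP "'a sptree" "'a sptree"

fun sp_arcs :: "'a sptree \<Rightarrow> 'a set" where
  "sp_arcs (SPL a) = {a}"
| "sp_arcs (SPS t1 t2) = sp_arcs t1 \<union> sp_arcs t2"
| "sp_arcs (SPP t1 t2) = sp_arcs t1 \<union> sp_arcs t2"

definition sp_verts :: "('a \<Rightarrow> 'v) \<Rightarrow> ('a \<Rightarrow> 'v) \<Rightarrow> 'a sptree \<Rightarrow> 'v set" where
  "sp_verts tlf hdf t = tlf ` sp_arcs t \<union> hdf ` sp_arcs t"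

fun sp_orig :: "('a \<Rightarrow> 'v) \<Rightarrow> ('a \<Rightarrow> 'v) \<Rightarrow> 'a sptree \<Rightarrow> 'v" where
  "sp_orig tlf hdf (SPL a) = tlf a"
| "sp_orig tlf hdf (SPS t1 t2) = sp_orig tlf hdf t1"
| "sp_orig tlf hdf (SPP t1 t2) = sp_orig tlf hdf t1"

fun sp_targ :: "('a \<Rightarrow> 'v) \<Rightarrow> ('a \<Rightarrow> 'v) \<Rightarrow> 'a sptree \<Rightarrow> 'v" where
  "sp_targ tlf hdf (SPL a) = hdf a"
| "sp_targ tlf hdf (SPS t1 t2) = sp_targ tlf hdf t2"
| "sp_targ tlf hdf (SPP t1 t2) = sp_targ tlf hdf t1"

(* The subgraph G_t (arcs sp_arcs t, vertices sp_verts t) is obtained by the series /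
   parallel composition prescribed by t: the two parts share exactly the identified
   vertices and no arcs. *)
fun sp_wf :: "('a \<Rightarrow> 'v) \<Rightarrow> ('a \<Rightarrow> 'v) \<Rightarrow> 'a sptree \<Rightarrow> bool" where
  "sp_wf tlf hdf (SPL a) = (tlf a \<noteq> hdf a)"
| "sp_wf tlf hdf (SPS t1 t2) =
     (sp_wf tlf hdf t1 \<and> sp_wf tlf hdf t2 \<and> sp_targ tlf hdf t1 = sp_orig tlf hdf t2
      \<and> sp_verts tlf hdf t1 \<inter> sp_verts tlf hdf t2 = {sp_targ tlf hdf t1}
      \<and> sp_arcs t1 \<inter> sp_arcs t2 = {})"
| "sp_wf tlf hdf (SPP t1 t2) =
     (sp_wf tlf hdf t1 \<and> sp_wf tlf hdf t2
      \<and> sp_orig tlf hdf t1 = sp_orig tlf hdf t2 \<and> sp_targ tlf hdf t1 = sp_targ tlf hdf t2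
      \<and> sp_verts tlf hdf t1 \<inter> sp_verts tlf hdf t2 = {sp_orig tlf hdf t1, sp_targ tlf hdf t1}
      \<and> sp_arcs t1 \<inter> sp_arcs t2 = {})"

(* vertices of the SP tree (as subtrees) *)
fun sp_subtrees :: "'a sptree \<Rightarrow> 'a sptree set" where
  "sp_subtrees (SPL a) = {SPL a}"
| "sp_subtrees (SPS t1 t2) = insert (SPS t1 t2) (sp_subtrees t1 \<union> sp_subtrees t2)"
| "sp_subtrees (SPP t1 t2) = insert (SPP t1 t2) (sp_subtrees t1 \<union> sp_subtrees t2)"

definition is_sp_tree_of ::
  "'v set \<Rightarrow> 'a set \<Rightarrow> ('a \<Rightarrow> 'v) \<Rightarrow> ('a \<Rightarrow> 'v) \<Rightarrow> 'a sptree \<Rightarrow> bool" where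
  "is_sp_tree_of V A tlf hdf T \<longleftrightarrow>
     sp_wf tlf hdf T \<and> sp_arcs T = A \<and> sp_verts tlf hdf T = V"

(* Demand label d_t(s, cc) in {0, \<infinity>}; scenarios are the elements of the finite type 'l *)
definition demand ::
  "('a \<Rightarrow> 'v) \<Rightarrow> ('a \<Rightarrow> 'v) \<Rightarrow> 'a set \<Rightarrow> ('a \<Rightarrow> int) \<Rightarrow> ('a \<Rightarrow> int)
   \<Rightarrow> ('l \<Rightarrow> 'v \<Rightarrow> int) \<Rightarrow> 'a sptree \<Rightarrow> ('l \<Rightarrow> int) \<Rightarrow> ('l \<Rightarrow> int) \<Rightarrow> enat" where
  "demand tlf hdf Afix u c b t s cc =
    (if (\<exists>f :: 'l \<Rightarrow> 'a \<Rightarrow> int.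
          (\<forall>k. (\<Sum>a\<in>sp_arcs t. c a * f k a) = cc k)
        \<and> (\<forall>w \<in> sp_verts tlf hdf t - {sp_targ tlf hdf t}. \<forall>k.
             (\<Sum>a\<in>{a \<in> sp_arcs t. tlf a = w}. f k a) - (\<Sum>a\<in>{a \<in> sp_arcs t. hdf a = w}. f k a)
             = (if w = sp_orig tlf hdf t then s k else b k w))
        \<and> (\<forall>a \<in> Afix \<inter> sp_arcs t. \<forall>k k'. f k a = f k' a)
        \<and> (\<forall>a \<in> sp_arcs t. \<forall>k. 0 \<le> f k a \<and> f k a \<le> u a))
     then 0 else \<infinity>)"

end

theory Submission
  imports Defs
begin


lemma fin_arcs: "finite (sp_arcs t)" by (induction t) auto

lemma ot_in: "sp_orig tlf hdf t \<in> sp_verts tlf hdf t \<and> sp_targ tlf hdf t \<in> sp_verts tlf hdf t"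
  by (induction t) (auto simp: sp_verts_def)

lemma wf_ot: "sp_wf tlf hdf t \<Longrightarrow> sp_orig tlf hdf t \<noteq> sp_targ tlf hdf t \<and> (\<forall>a\<in>sp_arcs t. hdf a \<noteq> sp_orig tlf hdf t)"
proof (induction t)
  case (SPS t1 t2)
  have o1: "sp_orig tlf hdf t1 \<in> sp_verts tlf hdf t1" and t2: "sp_targ tlf hdf t2 \<in> sp_verts tlf hdf t2"
    using ot_in by blast+
  have h2: "\<forall>a\<in>sp_arcs t2. hdf a \<in> sp_verts tlf hdf t2" by (auto simp: sp_verts_def)
  have A: "sp_orig tlf hdf t1 \<noteq> sp_targ tlf hdf t2"
  proof
    assume e: "sp_orig tlf hdf t1 = sp_targ tlf hdf t2"
    hence "sp_orig tlf hdf t1 \<in> sp_verts tlf hdf t1 \<inter> sp_verts tlf hdf t2" using o1 t2 by simp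
    hence "sp_orig tlf hdf t1 = sp_targ tlf hdf t1" using SPS.prems by auto
    thus False using SPS by simp
  qed
  have B: "hdf a \<noteq> sp_orig tlf hdf t1" if a: "a \<in> sp_arcs t2" for a
  proof
    assume e: "hdf a = sp_orig tlf hdf t1"
    hence "hdf a \<in> sp_verts tlf hdf t1 \<inter> sp_verts tlf hdf t2" using o1 h2 a by auto
    hence "hdf a = sp_orig tlf hdf t2" using SPS.prems by auto
    thus False using SPS a by simp
  qed
  show ?case using SPS A B by auto
qed auto

lemma sub_wf: "t \<in> sp_subtrees T \<Longrightarrow> sp_wf tlf hdf T \<Longrightarrow> sp_wf tlf hdf t"
  by (induction T) auto

lemma sub_arcs: "t \<in> sp_subtrees T \<Longrightarrow> sp_arcs t \<subseteq> sp_arcs T"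
  by (induction T) auto


definition fok where
  "fok tlf hdf Afix u c b t s cc (f :: 'l \<Rightarrow> 'a \<Rightarrow> int) \<longleftrightarrow>
          (\<forall>k. (\<Sum>a\<in>sp_arcs t. c a * f k a) = cc k)
        \<and> (\<forall>w \<in> sp_verts tlf hdf t - {sp_targ tlf hdf t}. \<forall>k.
             (\<Sum>a\<in>{a \<in> sp_arcs t. tlf a = w}. f k a) - (\<Sum>a\<in>{a \<in> sp_arcs t. hdf a = w}. f k a)
             = (if w = sp_orig tlf hdf t then s k else b k w))
        \<and> (\<forall>a \<in> Afix \<inter> sp_arcs t. \<forall>k k'. f k a = f k' a)
        \<and> (\<forall>a \<in> sp_arcs t. \<forall>k. 0 \<le> f k a \<and> f k a \<le> u a)"

lemma demand_fok: "demand tlf hdf Afix u c b t s cc = (if \<exists>f. fok tlf hdf Afix u c b t s cc f then 0 else \<infinity>)"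
  unfolding demand_def fok_def by simp

lemma sum_split:
  assumes "finite X" "finite Y" "X \<inter> Y = {}"
  shows "(\<Sum>a\<in>{a \<in> X \<union> Y. P a}. g a) = (\<Sum>a\<in>{a \<in> X. P a}. g a) + (\<Sum>a\<in>{a \<in> Y. P a}. g a)"
proof -
  have "{a \<in> X \<union> Y. P a} = {a \<in> X. P a} \<union> {a \<in> Y. P a}" by auto
  thus ?thesis using assms by (simp add: sum.union_disjoint disjoint_iff)
qed

lemma sum_empty_w:
  assumes "w \<notin> sp_verts tlf hdf t"
  shows "{a \<in> sp_arcs t. tlf a = w} = {}" "{a \<in> sp_arcs t. hdf a = w} = {}"
  using assms by (auto simp: sp_verts_def)

lemma par_equiv:
  fixes x y :: "'a sptree" and f :: "'l \<Rightarrow> 'a \<Rightarrow> int"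
  assumes wf: "sp_wf tlf hdf (SPP x y)"
    and cpos: "\<forall>a\<in>sp_arcs (SPP x y). 0 \<le> c a"
  shows "(\<exists>f. fok tlf hdf Afix u c b (SPP x y) s cc f) \<longleftrightarrow>
    (\<exists>sx sy cx cy. (\<forall>k. sx k + sy k = s k \<and> cx k + cy k = cc k
                \<and> 0 \<le> sx k \<and> 0 \<le> sy k \<and> 0 \<le> cx k \<and> 0 \<le> cy k)
       \<and> (\<exists>f. fok tlf hdf Afix u c b x sx cx f) \<and> (\<exists>f. fok tlf hdf Afix u c b y sy cy f))"
  (is "?L \<longleftrightarrow> ?R")
proof -
  let ?o = "sp_orig tlf hdf x" and ?t = "sp_targ tlf hdf x"
  have wx: "sp_wf tlf hdf x" and wy: "sp_wf tlf hdf y"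
    and oo: "sp_orig tlf hdf y = ?o" and tt: "sp_targ tlf hdf y = ?t"
    and vi: "sp_verts tlf hdf x \<inter> sp_verts tlf hdf y = {?o, ?t}"
    and di: "sp_arcs x \<inter> sp_arcs y = {}" using wf by auto
  have fx: "finite (sp_arcs x)" and fy: "finite (sp_arcs y)" by (rule fin_arcs)+
  have ox: "\<forall>a\<in>sp_arcs x. hdf a \<noteq> ?o" using wf_ot[OF wx] by blast
  have oy: "\<forall>a\<in>sp_arcs y. hdf a \<noteq> ?o" using wf_ot[OF wy] oo by metis
  have ex: "{a \<in> sp_arcs x. hdf a = ?o} = {}" using ox by auto
  have ey: "{a \<in> sp_arcs y. hdf a = ?o} = {}" using oy by auto
  have vv: "sp_verts tlf hdf (SPP x y) = sp_verts tlf hdf x \<union> sp_verts tlf hdf y"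
    by (auto simp: sp_verts_def)
  have oin: "?o \<in> sp_verts tlf hdf x" "?o \<in> sp_verts tlf hdf y" using ot_in oo by metis+
  have ont: "?o \<noteq> ?t" using wf_ot[OF wx] by blast
  have SS: "\<And>P g. (\<Sum>a\<in>{a \<in> sp_arcs (SPP x y). P a}. g a) = (\<Sum>a\<in>{a \<in> sp_arcs x. P a}. g a) + (\<Sum>a\<in>{a \<in> sp_arcs y. P a}. g a)"
    using sum_split[OF fx fy di] by simp
  have CS: "\<And>g. (\<Sum>a\<in>sp_arcs (SPP x y). g a) = (\<Sum>a\<in>sp_arcs x. g a) + (\<Sum>a\<in>sp_arcs y. g a)"
    using sum.union_disjoint[OF fx fy di] by simp
  show ?thesis
  proof
    assume ?L
    then obtain f where F: "fok tlf hdf Afix u c b (SPP x y) s cc f" by blast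
    define sx where "sx k = (\<Sum>a\<in>{a \<in> sp_arcs x. tlf a = ?o}. f k a)" for k
    define sy where "sy k = (\<Sum>a\<in>{a \<in> sp_arcs y. tlf a = ?o}. f k a)" for k
    define cx where "cx k = (\<Sum>a\<in>sp_arcs x. c a * f k a)" for k
    define cy where "cy k = (\<Sum>a\<in>sp_arcs y. c a * f k a)" for k
    have C: "\<forall>k. (\<Sum>a\<in>sp_arcs (SPP x y). c a * f k a) = cc k"
      and Vc: "\<forall>w \<in> sp_verts tlf hdf (SPP x y) - {?t}. \<forall>k.
             (\<Sum>a\<in>{a \<in> sp_arcs (SPP x y). tlf a = w}. f k a) - (\<Sum>a\<in>{a \<in> sp_arcs (SPP x y). hdf a = w}. f k a)
             = (if w = ?o then s k else b k w)"
      and Fx: "\<forall>a \<in> Afix \<inter> sp_arcs (SPP x y). \<forall>k k'. f k a = f k' a"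
      and U: "\<forall>a \<in> sp_arcs (SPP x y). \<forall>k. 0 \<le> f k a \<and> f k a \<le> u a"
      using F unfolding fok_def by auto
    have nn: "0 \<le> sx k \<and> 0 \<le> sy k \<and> 0 \<le> cx k \<and> 0 \<le> cy k" for k
      unfolding sx_def sy_def cx_def cy_def using U cpos
      by (auto intro!: sum_nonneg)
    have sxy: "sx k + sy k = s k" for k
    proof -
      have "?o \<in> sp_verts tlf hdf (SPP x y) - {?t}" using vv oin ont by auto
      from Vc[rule_format, OF this, of k] show ?thesis
        unfolding SS sx_def sy_def ex ey by simp
    qed
    have cxy: "cx k + cy k = cc k" for k using C CS unfolding cx_def cy_def by metis
    have fokx: "fok tlf hdf Afix u c b x sx cx f"
      unfolding fok_def
    proof (intro conjI ballI allI)
      fix w k assume w: "w \<in> sp_verts tlf hdf x - {?t}"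
      show "(\<Sum>a\<in>{a \<in> sp_arcs x. tlf a = w}. f k a) - (\<Sum>a\<in>{a \<in> sp_arcs x. hdf a = w}. f k a)
             = (if w = ?o then sx k else b k w)"
      proof (cases "w = ?o")
        case True thus ?thesis by (simp add: sx_def ex)
      next
        case False
        hence "w \<notin> sp_verts tlf hdf y" using w vi by auto
        note e = sum_empty_w[OF this]
        have "w \<in> sp_verts tlf hdf (SPP x y) - {?t}" using w vv by auto
        from Vc[rule_format, OF this, of k] show ?thesis using False unfolding SS e by simp
      qed
    qed (use Fx U in \<open>auto simp: cx_def cy_def\<close>)
    have foky: "fok tlf hdf Afix u c b y sy cy f"
      unfolding fok_def
    proof (intro conjI ballI allI)
      fix w k assume w: "w \<in> sp_verts tlf hdf y - {sp_targ tlf hdf y}"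
      show "(\<Sum>a\<in>{a \<in> sp_arcs y. tlf a = w}. f k a) - (\<Sum>a\<in>{a \<in> sp_arcs y. hdf a = w}. f k a)
             = (if w = sp_orig tlf hdf y then sy k else b k w)"
      proof (cases "w = ?o")
        case True thus ?thesis by (simp add: sy_def ey oo)
      next
        case False
        hence "w \<notin> sp_verts tlf hdf x" using w vi tt by auto
        note e = sum_empty_w[OF this]
        have "w \<in> sp_verts tlf hdf (SPP x y) - {?t}" using w vv tt by auto
        from Vc[rule_format, OF this, of k] show ?thesis using False oo unfolding SS e by simp
      qed
    qed (use Fx U in \<open>auto simp: cx_def cy_def\<close>)
    show ?R using nn sxy cxy fokx foky by blast
  next
    assume ?R
    then obtain sx sy cx cy fx' fy' where N: "\<forall>k. sx k + sy k = s k \<and> cx k + cy k = cc k"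
      and Fx: "fok tlf hdf Afix u c b x sx cx fx'" and Fy: "fok tlf hdf Afix u c b y sy cy fy'"
      by blast
    define f where "f k a = (if a \<in> sp_arcs x then fx' k a else fy' k a)" for k a
    have fxe: "\<And>P. (\<Sum>a\<in>{a \<in> sp_arcs x. P a}. f k a) = (\<Sum>a\<in>{a \<in> sp_arcs x. P a}. fx' k a)" for k
      by (rule sum.cong) (auto simp: f_def)
    have fye: "\<And>P. (\<Sum>a\<in>{a \<in> sp_arcs y. P a}. f k a) = (\<Sum>a\<in>{a \<in> sp_arcs y. P a}. fy' k a)" for k
      using di by (intro sum.cong) (auto simp: f_def)
    have cxe: "(\<Sum>a\<in>sp_arcs x. c a * f k a) = (\<Sum>a\<in>sp_arcs x. c a * fx' k a)" for k
      by (rule sum.cong) (auto simp: f_def)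
    have cye: "(\<Sum>a\<in>sp_arcs y. c a * f k a) = (\<Sum>a\<in>sp_arcs y. c a * fy' k a)" for k
      using di by (intro sum.cong) (auto simp: f_def)
    have "fok tlf hdf Afix u c b (SPP x y) s cc f"
      unfolding fok_def
    proof (intro conjI ballI allI)
      fix k show "(\<Sum>a\<in>sp_arcs (SPP x y). c a * f k a) = cc k"
        using Fx Fy N unfolding CS cxe cye fok_def by metis
    next
      fix w k assume w: "w \<in> sp_verts tlf hdf (SPP x y) - {sp_targ tlf hdf (SPP x y)}"
      have Vx: "\<forall>w \<in> sp_verts tlf hdf x - {?t}. \<forall>k.
             (\<Sum>a\<in>{a \<in> sp_arcs x. tlf a = w}. fx' k a) - (\<Sum>a\<in>{a \<in> sp_arcs x. hdf a = w}. fx' k a)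
             = (if w = ?o then sx k else b k w)" using Fx unfolding fok_def by simp
      have Vy: "\<forall>w \<in> sp_verts tlf hdf y - {?t}. \<forall>k.
             (\<Sum>a\<in>{a \<in> sp_arcs y. tlf a = w}. fy' k a) - (\<Sum>a\<in>{a \<in> sp_arcs y. hdf a = w}. fy' k a)
             = (if w = ?o then sy k else b k w)" using Fy oo tt unfolding fok_def by simp
      show "(\<Sum>a\<in>{a \<in> sp_arcs (SPP x y). tlf a = w}. f k a) - (\<Sum>a\<in>{a \<in> sp_arcs (SPP x y). hdf a = w}. f k a)
             = (if w = sp_orig tlf hdf (SPP x y) then s k else b k w)"
      proof (cases "w = ?o")
        case True
        have a: "?o \<in> sp_verts tlf hdf x - {?t}" "?o \<in> sp_verts tlf hdf y - {?t}" using oin ont by auto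
        show ?thesis using True Vx[rule_format, OF a(1), of k] Vy[rule_format, OF a(2), of k] N[rule_format, of k]
          unfolding SS fxe fye by simp
      next
        case False
        show ?thesis
        proof (cases "w \<in> sp_verts tlf hdf x")
          case True
          hence "w \<notin> sp_verts tlf hdf y" using w vi False by auto
          note e = sum_empty_w[OF this]
          have "w \<in> sp_verts tlf hdf x - {?t}" using True w by auto
          from Vx[rule_format, OF this, of k] show ?thesis using False
            unfolding SS fxe fye e by simp
        next
          case nx: False
          note e = sum_empty_w[OF nx]
          have "w \<in> sp_verts tlf hdf y - {?t}" using nx w vv by auto
          from Vy[rule_format, OF this, of k] show ?thesis using False
            unfolding SS fxe fye e by simp
        qed
      qed
    next
      fix a k k' assume "a \<in> Afix \<inter> sp_arcs (SPP x y)"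
      thus "f k a = f k' a" using Fx Fy unfolding fok_def f_def by auto
    next
      fix a k assume "a \<in> sp_arcs (SPP x y)"
      thus "0 \<le> f k a" "f k a \<le> u a" using Fx Fy di unfolding fok_def f_def by auto
    qed
    thus ?L by blast
  qed
qed

theorem mainTheorem10:
  fixes V :: "'v set" and A Afix :: "'a set" and tlf hdf :: "'a \<Rightarrow> 'v"
    and u c :: "'a \<Rightarrow> int" and b :: "'l::finite \<Rightarrow> 'v \<Rightarrow> int"
    and T v x y :: "'a sptree" and s cc :: "'l \<Rightarrow> int"
  assumes "finite A"
    and "Afix \<subseteq> A"
    and "\<forall>a\<in>A. 0 \<le> u a"
    and "\<forall>a\<in>A. 0 \<le> c a"
    and "\<forall>k. (\<Sum>w\<in>V. b k w) = 0"
    and "is_sp_tree_of V A tlf hdf T"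
    and "v \<in> sp_subtrees T"
    and "v = SPP x y"
    and "\<forall>k. 0 \<le> cc k"
  shows "demand tlf hdf Afix u c b v s cc =
    Inf {demand tlf hdf Afix u c b x sx cx + demand tlf hdf Afix u c b y sy cy | sx sy cx cy.
           (\<forall>k. sx k + sy k = s k \<and> cx k + cy k = cc k
                \<and> 0 \<le> sx k \<and> 0 \<le> sy k \<and> 0 \<le> cx k \<and> 0 \<le> cy k)}"
proof -
  have wf: "sp_wf tlf hdf (SPP x y)" using assms(6,7,8) sub_wf unfolding is_sp_tree_of_def by metis
  have cp: "\<forall>a\<in>sp_arcs (SPP x y). 0 \<le> c a" using assms(4,6,7,8) sub_arcs
    unfolding is_sp_tree_of_def by blast
  note E = par_equiv[OF wf cp, of Afix u b s cc]
  let ?S = "{demand tlf hdf Afix u c b x sx cx + demand tlf hdf Afix u c b y sy cy | sx sy cx cy.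
           (\<forall>k. sx k + sy k = s k \<and> cx k + cy k = cc k
                \<and> 0 \<le> sx k \<and> 0 \<le> sy k \<and> 0 \<le> cx k \<and> 0 \<le> cy k)}"
  show ?thesis
  proof (cases "\<exists>f. fok tlf hdf Afix u c b (SPP x y) s cc f")
    case True
    then obtain sx sy cx cy where C: "(\<forall>k. sx k + sy k = s k \<and> cx k + cy k = cc k
                \<and> 0 \<le> sx k \<and> 0 \<le> sy k \<and> 0 \<le> cx k \<and> 0 \<le> cy k)"
       and X: "\<exists>f. fok tlf hdf Afix u c b x sx cx f" and Y: "\<exists>f. fok tlf hdf Afix u c b y sy cy f"
      using True[unfolded E] by blast
    have "demand tlf hdf Afix u c b x sx cx = 0" using X by (simp add: demand_fok)
    moreover have "demand tlf hdf Afix u c b y sy cy = 0" using Y by (simp add: demand_fok)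
    ultimately have "0 \<in> ?S"
      unfolding mem_Collect_eq using C
      by (intro exI[of _ sx] exI[of _ sy] exI[of _ cx] exI[of _ cy]) simp
    hence "Inf ?S \<le> 0" by (rule Inf_lower)
    hence "Inf ?S = 0" by simp
    thus ?thesis using True assms(8) by (simp add: demand_fok)
  next
    case False
    have "z = \<infinity>" if "z \<in> ?S" for z
    proof -
      from that obtain sx sy cx cy where C: "(\<forall>k. sx k + sy k = s k \<and> cx k + cy k = cc k
                \<and> 0 \<le> sx k \<and> 0 \<le> sy k \<and> 0 \<le> cx k \<and> 0 \<le> cy k)"
        and z: "z = demand tlf hdf Afix u c b x sx cx + demand tlf hdf Afix u c b y sy cy" by blast
      have "\<not> ((\<exists>f. fok tlf hdf Afix u c b x sx cx f) \<and> (\<exists>f. fok tlf hdf Afix u c b y sy cy f))"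
        using False[unfolded E] C by blast
      thus ?thesis unfolding z demand_fok by auto
    qed
    hence "\<infinity> \<le> Inf ?S" by (intro Inf_greatest) simp
    hence "Inf ?S = \<infinity>" by (simp add: top_unique[unfolded top_enat_def])
    thus ?thesis using False assms(8) by (simp add: demand_fok)
  qed
qed

end
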